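(* There exists a constant $C>0$ such that for all integers $n\ge2$, $g\ge1$ with $\theta:=g/n\ge x^{-2/3}$, where $x:=n+g$, \[\Big|\beta(n,g)-e^{-f'(\theta)}-\frac{e^{-f'(\theta)}}{n}\Big(\frac{f''(\theta)}{2}-j'(\theta)\Big)\Big|\le C\,x^{-4/3}.\]
   Context: Define $\lambda:[0,\infty)\to(0,1/4]$ by $\lambda(0)=1/4$ and, for $\theta>0$, $\lambda(\theta)$ is the unique $\lambda\in(0,1/4)$ with $-1+\frac{\operatorname{artanh}(\sqrt{1-4\lambda})}{\sqrt{1-4\lambda}}=\theta$. For $\theta>0$ set $f(\theta)=-\ln\lambda(\theta)-2\theta-\theta\ln(1-4\lambda(\theta))$ and $j(\theta)=-\tfrac12\ln(1-4(\theta+1)\lambda(\theta))+\tfrac12\ln 2$. For integers $n\ge1$, $g\ge1$ let \[\Omega(n,g)=\frac{\sqrt g\,g^g}{\sqrt{2\pi}\,e^g\,g!}\,n^{2g-2}\exp\!\Big(nf\big(\tfrac gn\big)+j\big(\tfrac gn\big)\Big),\qquad \Omega(n,0)=\frac{4^n n^{-3/2}}{\sqrt{2\pi}},\] and for $n\ge2$, $g\ge1$ let $\beta(n,g)=n^2\frac{\Omega(n,g-1)}{\Omega(n,g)}$. *)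

theory Defs
  imports "HOL-Analysis.Analysis"
begin

definition lam :: "real \<Rightarrow> real" where
  "lam \<theta> = (if \<theta> \<le> 0 then 1/4 else
     (THE l. 0 < l \<and> l < 1/4 \<and> -1 + artanh (sqrt (1 - 4*l)) / sqrt (1 - 4*l) = \<theta>))"

definition fF :: "real \<Rightarrow> real" where
  "fF \<theta> = - ln (lam \<theta>) - 2*\<theta> - \<theta> * ln (1 - 4 * lam \<theta>)"

definition jJ :: "real \<Rightarrow> real" where
  "jJ \<theta> = - (1/2) * ln (1 - 4*(\<theta>+1) * lam \<theta>) + (1/2) * ln 2"

definition Omega :: "nat \<Rightarrow> nat \<Rightarrow> real" where
  "Omega n g = (if g = 0 then 4 ^ n * real n powr (-3/2) / sqrt (2*pi)
     else sqrt (real g) * real g ^ g / (sqrt (2*pi) * exp (real g) * fact g)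
          * real n ^ (2*g - 2) * exp (real n * fF (real g / real n) + jJ (real g / real n)))"

definition beta :: "nat \<Rightarrow> nat \<Rightarrow> real" where
  "beta n g = real n ^ 2 * Omega n (g - 1) / Omega n g"

end

theory Submission
  imports Defs "HOL-Real_Asymp.Real_Asymp"
begin

definition ph :: "real \<Rightarrow> real" where "ph u = u * cosh u / sinh u - 1"
definition Dd :: "real \<Rightarrow> real" where "Dd u = sinh u * cosh u - u"
definition dph :: "real \<Rightarrow> real" where "dph u = Dd u / sinh u ^ 2"

lemma Dd_deriv: "DERIV Dd x :> 2 * sinh x ^ 2"
  unfolding Dd_def
  by (rule derivative_eq_intros refl)+ (use cosh_square_eq[of x] in \<open>simp add: power2_eq_square\<close>)

lemma Dd_pos: assumes u: "u > 0" shows "Dd u > 0"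
proof -
  obtain z where z: "0 < z" "z < u" "Dd u - Dd 0 = (u - 0) * (2 * sinh z ^ 2)"
    using MVT2[of 0 u Dd "\<lambda>x. 2 * sinh x ^ 2"] u Dd_deriv by blast
  have "Dd 0 = 0" by (simp add: Dd_def)
  with z u show ?thesis by simp
qed

lemma ph_pos: assumes u: "u > 0" shows "ph u > 0"
proof -
  let ?G = "\<lambda>x::real. x * cosh x - sinh x"
  have d: "DERIV ?G x :> x * sinh x" for x
    by (rule derivative_eq_intros refl)+ simp
  obtain z where z: "0 < z" "z < u" "?G u - ?G 0 = (u - 0) * (z * sinh z)"
    using MVT2[of 0 u ?G "\<lambda>x. x * sinh x"] u d by blast
  have "?G u > 0" using z u by simp
  then have "u * cosh u / sinh u > 1" using u by (simp add: field_simps)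
  then show ?thesis by (simp add: ph_def)
qed

lemma ph_deriv: assumes u: "u > 0" shows "DERIV ph u :> dph u"
proof -
  have s: "sinh u \<noteq> 0" using u by simp
  have "DERIV (\<lambda>u. u * cosh u / sinh u - 1) u :>
     ((1 * cosh u + u * sinh u) * sinh u - u * cosh u * cosh u) / (sinh u * sinh u) - 0"
    using u by (auto intro!: derivative_eq_intros simp: s)
  moreover have "((1 * cosh u + u * sinh u) * sinh u - u * cosh u * cosh u) / (sinh u * sinh u) - 0 = dph u"
    using cosh_square_eq[of u] s unfolding dph_def Dd_def by (simp add: field_simps power2_eq_square)
  ultimately show ?thesis unfolding ph_def by simp
qed

lemma dph_pos: "u > 0 \<Longrightarrow> dph u > 0"
  using Dd_pos by (simp add: dph_def)

lemma ph_mono: assumes "0 < a" "a < b" shows "ph a < ph b"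
proof (rule DERIV_pos_imp_increasing[OF assms(2)])
  fix x assume "a \<le> x" "x \<le> b"
  then have "x > 0" using assms by simp
  then show "\<exists>y. DERIV ph x :> y \<and> y > 0" using ph_deriv dph_pos by blast
qed

lemma ph_inj: "0 < a \<Longrightarrow> 0 < b \<Longrightarrow> ph a = ph b \<Longrightarrow> a = b"
  using ph_mono[of a b] ph_mono[of b a] by (cases a b rule: linorder_cases) auto

lemma ph_lim0: "(ph \<longlongrightarrow> 0) (at_right 0)"
  unfolding ph_def by real_asymp

lemma ph_limtop: "filterlim ph at_top at_top"
  unfolding ph_def by real_asymp

lemma ph_cont: "0 < a \<Longrightarrow> continuous_on {a..b} ph"
proof (intro continuous_at_imp_continuous_on ballI)
  fix x assume "0 < a" "x \<in> {a..b}"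
  then have "x > 0" by simp
  then show "isCont ph x" using DERIV_isCont[OF ph_deriv] by blast
qed

lemma ph_surj: assumes t: "t > 0" shows "\<exists>u>0. ph u = t"
proof -
  have "eventually (\<lambda>v. ph v < t) (at_right 0)"
    using order_tendstoD(2)[OF ph_lim0 t] .
  then obtain b where b: "b > 0" "\<And>y. y > 0 \<Longrightarrow> y < b \<Longrightarrow> ph y < t"
    unfolding eventually_at_right_field by auto
  define a where "a = b / 2"
  have a: "a > 0" "ph a < t" using b by (auto simp: a_def)
  have "eventually (\<lambda>v. ph v > t) at_top"
    using ph_limtop by (simp add: filterlim_at_top_dense)
  then obtain N where N: "\<And>v. v \<ge> N \<Longrightarrow> ph v > t"
    unfolding eventually_at_top_linorder by auto
  define c where "c = max N a"
  have c: "c \<ge> a" "ph c > t" using N by (auto simp: c_def)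
  obtain x where "a \<le> x" "x \<le> c" "ph x = t"
    using IVT'[of ph a t c] a c ph_cont[OF a(1)] by force
  then show ?thesis using a by (intro exI[of _ x]) auto
qed

definition psi :: "real \<Rightarrow> real" where "psi t = (THE u. 0 < u \<and> ph u = t)"

lemma psi: assumes "t > 0" shows "psi t > 0" "ph (psi t) = t"
proof -
  obtain u where u: "u > 0" "ph u = t" using ph_surj assms by blast
  have "psi t = u" unfolding psi_def
    by (rule the_equality) (use u ph_inj in auto)
  then show "psi t > 0" "ph (psi t) = t" using u by auto
qed

lemma psi_ph: "u > 0 \<Longrightarrow> psi (ph u) = u"
  using psi[of "ph u"] ph_pos ph_inj by blast


lemma tanh_artanh_real: assumes "-1 < s" "s < (1::real)" shows "tanh (artanh s) = s"
proof -
  have p: "(1 + s) / (1 - s) > 0" using assms by simp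
  have e: "exp (- 2 * artanh s) = (1 - s) / (1 + s)"
    unfolding artanh_def using p assms
    by (simp add: exp_minus exp_ln)
  have "(1 - (1 - s) / (1 + s)) / (1 + (1 - s) / (1 + s)) = s" using assms by (simp add: field_simps)
  then show ?thesis unfolding tanh_real_altdef e .
qed

lemma artanh_pos: assumes "0 < s" "s < (1::real)" shows "artanh s > 0"
  using assms unfolding artanh_def by simp

definition Lu :: "real \<Rightarrow> real" where "Lu u = 1 / (4 * cosh u ^ 2)"

lemma one_minus_Lu: "1 - 4 * Lu u = tanh u ^ 2"
proof -
  have c: "cosh u ^ 2 = sinh u ^ 2 + 1" by (rule cosh_square_eq)
  have nz: "cosh u ^ 2 \<noteq> 0" by simp
  have "1 - 4 * Lu u = (cosh u ^ 2 - 1) / cosh u ^ 2" unfolding Lu_def using nz by (simp add: field_simps)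
  also have "\<dots> = sinh u ^ 2 / cosh u ^ 2" using c by simp
  also have "\<dots> = tanh u ^ 2" unfolding tanh_def by (simp add: power_divide)
  finally show ?thesis .
qed

lemma lam_eq: assumes t: "t > 0" shows "lam t = Lu (psi t)"
proof -
  define u where "u = psi t"
  have u: "u > 0" "ph u = t" using psi[OF t] by (auto simp: u_def)
  have c1: "cosh u > 1" using u cosh_real_ge_1[of u] cosh_real_one_iff[of u] by linarith
  have th: "tanh u > 0" using u by simp
  have sq: "sqrt (1 - 4 * Lu u) = tanh u" using th by (simp add: one_minus_Lu)
  have phu: "ph u = u / tanh u - 1" unfolding ph_def tanh_def by simp
  have P: "0 < Lu u \<and> Lu u < 1/4 \<and> -1 + artanh (sqrt (1 - 4 * Lu u)) / sqrt (1 - 4 * Lu u) = t"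
  proof (intro conjI)
    show "0 < Lu u" unfolding Lu_def by simp
    have "cosh u ^ 2 > 1" using c1 by (simp add: power2_eq_square) (metis c1 less_1_mult)
    then show "Lu u < 1/4" unfolding Lu_def by (simp add: field_simps)
    show "-1 + artanh (sqrt (1 - 4 * Lu u)) / sqrt (1 - 4 * Lu u) = t"
      using u(2) phu by (simp add: sq artanh_tanh_real)
  qed
  have lt: "lam t = (THE l. 0 < l \<and> l < 1/4 \<and> -1 + artanh (sqrt (1 - 4 * l)) / sqrt (1 - 4 * l) = t)"
    unfolding lam_def using t by simp
  have "lam t = Lu u" unfolding lt
  proof (rule the_equality)
    show "0 < Lu u \<and> Lu u < 1/4 \<and> -1 + artanh (sqrt (1 - 4 * Lu u)) / sqrt (1 - 4 * Lu u) = t"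
      using P .
  next
    fix l assume l: "0 < l \<and> l < 1/4 \<and> -1 + artanh (sqrt (1 - 4 * l)) / sqrt (1 - 4 * l) = t"
    define s where "s = sqrt (1 - 4 * l)"
    have s: "0 < s" "s < 1" using l by (auto simp: s_def)
    define v where "v = artanh s"
    have v: "v > 0" "tanh v = s" using artanh_pos[OF s] tanh_artanh_real[of s] s by (auto simp: v_def)
    have "ph v = v / tanh v - 1" unfolding ph_def tanh_def by simp
    also have "\<dots> = t" using l v by (simp add: s_def v_def)
    finally have "v = u" using ph_inj[of v u] u v by simp
    have "l = (1 - s^2) / 4" using l by (simp add: s_def)
    also have "\<dots> = (1 - tanh u ^ 2) / 4" using v \<open>v = u\<close> by simp
    also have "\<dots> = Lu u" using one_minus_Lu[of u] by simp
    finally show "l = Lu u" .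
  qed
  then show ?thesis by (simp add: u_def)
qed


definition sD :: "real \<Rightarrow> real" where "sD u = 2 * sinh u ^ 2"
definition dphd :: "real \<Rightarrow> real" where
  "dphd u = (sD u * sinh u ^ 2 - Dd u * (2 * sinh u * cosh u)) / (sinh u ^ 2) ^ 2"
definition Fu2 :: "real \<Rightarrow> real" where
  "Fu2 u = ln 4 + 2 * ln (cosh u) - 2 * ph u - 2 * ph u * (ln (sinh u) - ln (cosh u))"
definition f1u :: "real \<Rightarrow> real" where "f1u u = -2 * (ln (sinh u) - ln (cosh u))"
definition f1d :: "real \<Rightarrow> real" where "f1d u = -2 * (cosh u / sinh u - sinh u / cosh u)"
definition f2u :: "real \<Rightarrow> real" where "f2u u = f1d u / dph u"
definition f1dd :: "real \<Rightarrow> real" where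
  "f1dd u = -2 * ((sinh u * sinh u - cosh u * cosh u) / (sinh u)\<^sup>2
                 - (cosh u * cosh u - sinh u * sinh u) / (cosh u)\<^sup>2)"
definition f2d :: "real \<Rightarrow> real" where
  "f2d u = (f1dd u * dph u - f1d u * dphd u) / (dph u)\<^sup>2"
definition f3u :: "real \<Rightarrow> real" where "f3u u = f2d u / dph u"
definition Ju2 :: "real \<Rightarrow> real" where
  "Ju2 u = -(1/2) * (ln (Dd u) - ln (sinh u) - ln (cosh u)) + (1/2) * ln 2"
definition j0d :: "real \<Rightarrow> real" where
  "j0d u = -(1/2) * (sD u / Dd u - cosh u / sinh u - sinh u / cosh u)"
definition j1u :: "real \<Rightarrow> real" where "j1u u = j0d u / dph u"
definition j0dd :: "real \<Rightarrow> real" where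
  "j0dd u = -(1/2) * ((4 * sinh u * cosh u * Dd u - sD u * sD u) / (Dd u)\<^sup>2
      - (sinh u * sinh u - cosh u * cosh u) / (sinh u)\<^sup>2
      - (cosh u * cosh u - sinh u * sinh u) / (cosh u)\<^sup>2)"
definition j1d :: "real \<Rightarrow> real" where
  "j1d u = (j0dd u * dph u - j0d u * dphd u) / (dph u)\<^sup>2"
definition j2u :: "real \<Rightarrow> real" where "j2u u = j1d u / dph u"

lemma Dd_deriv': "DERIV Dd x :> sD x"
  using Dd_deriv by (simp add: sD_def)

lemma dph_deriv: assumes u: "u > 0" shows "DERIV dph u :> dphd u"
proof -
  have s: "sinh u \<noteq> 0" using u by simp
  show ?thesis unfolding dph_def dphd_def
    using u by (auto intro!: derivative_eq_intros Dd_deriv' simp: s)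
qed

lemma Fu2_deriv: assumes u: "u > 0" shows "DERIV Fu2 u :> f1u u * dph u"
proof -
  have s: "sinh u > 0" using u by simp
  have "DERIV Fu2 u :> 0 + 2 * (sinh u / cosh u) - 2 * dph u
     - (2 * dph u * (ln (sinh u) - ln (cosh u)) + 2 * ph u * (cosh u / sinh u - sinh u / cosh u))"
    unfolding Fu2_def using u s
    apply (auto intro!: derivative_eq_intros ph_deriv)
    done
  moreover have "0 + 2 * (sinh u / cosh u) - 2 * dph u
     - (2 * dph u * (ln (sinh u) - ln (cosh u)) + 2 * ph u * (cosh u / sinh u - sinh u / cosh u))
     = f1u u * dph u"
    using s cosh_square_eq[of u] unfolding f1u_def dph_def ph_def Dd_def
    apply (simp add: field_simps power2_eq_square)
    apply algebra
    done
  ultimately show ?thesis by simp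
qed

lemma f1u_deriv: assumes u: "u > 0" shows "DERIV f1u u :> f2u u * dph u"
proof -
  have s: "sinh u > 0" using u by simp
  have "DERIV f1u u :> f1d u"
    unfolding f1u_def f1d_def using u s
    by (auto intro!: derivative_eq_intros simp: algebra_simps power2_eq_square)
  then show ?thesis using dph_pos[OF u] by (simp add: f2u_def)
qed

lemma f2u_deriv: assumes u: "u > 0" shows "DERIV f2u u :> f3u u * dph u"
proof -
  have s: "sinh u > 0" using u by simp
  have d: "dph u > 0" using dph_pos[OF u] .
  have "DERIV f1d u :> f1dd u"
    unfolding f1d_def f1dd_def using u s
    by (auto intro!: derivative_eq_intros simp: field_simps power2_eq_square)
  then have "DERIV f2u u :> f2d u"
    unfolding f2u_def[abs_def] f2d_def using d dph_deriv[OF u]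
    by (auto intro!: derivative_eq_intros simp: algebra_simps power2_eq_square)
  then show ?thesis using d by (simp add: f3u_def)
qed

lemma Ju2_deriv: assumes u: "u > 0" shows "DERIV Ju2 u :> j1u u * dph u"
proof -
  have s: "sinh u > 0" using u by simp
  have D: "Dd u > 0" using Dd_pos[OF u] .
  have "DERIV Ju2 u :> j0d u"
    unfolding Ju2_def j0d_def using u s D
    by (auto intro!: derivative_eq_intros Dd_deriv' simp: algebra_simps power2_eq_square)
  then show ?thesis using dph_pos[OF u] by (simp add: j1u_def)
qed

lemma j1u_deriv: assumes u: "u > 0" shows "DERIV j1u u :> j2u u * dph u"
proof -
  have s: "sinh u > 0" using u by simp
  have D: "Dd u > 0" using Dd_pos[OF u] .
  have d: "dph u > 0" using dph_pos[OF u] .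
  have "DERIV j0d u :> j0dd u"
    unfolding j0d_def j0dd_def sD_def using u s D
    by (auto intro!: derivative_eq_intros Dd_deriv'[unfolded sD_def] simp: field_simps power2_eq_square)
  then have "DERIV j1u u :> j1d u"
    unfolding j1u_def[abs_def] j1d_def using d dph_deriv[OF u]
    by (auto intro!: derivative_eq_intros simp: algebra_simps power2_eq_square)
  then show ?thesis using d by (simp add: j2u_def)
qed


lemma psi_cont: assumes t: "t > 0" shows "isCont psi t"
proof -
  define x where "x = psi t"
  have x: "x > 0" "ph x = t" using psi[OF t] by (auto simp: x_def)
  have "isCont psi (ph x)"
  proof (rule isCont_inverse_function[where d = "x/2" and f = ph and g = psi and x = x])
    show "0 < x/2" using x by simp
    fix z assume "\<bar>z - x\<bar> \<le> x / 2"
    then have z: "z > 0" using x by arith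
    show "psi (ph z) = z" using psi_ph[OF z] .
    show "isCont ph z" using DERIV_isCont[OF ph_deriv[OF z]] .
  qed
  then show ?thesis using x by simp
qed

lemma psi_deriv: assumes t: "t > 0" shows "DERIV psi t :> inverse (dph (psi t))"
proof (rule DERIV_inverse_function[where f = ph and a = 0 and b = "t + 1"])
  show "DERIV ph (psi t) :> dph (psi t)" using ph_deriv psi[OF t] by blast
  show "dph (psi t) \<noteq> 0" using dph_pos psi[OF t] by (metis less_irrefl)
  show "0 < t" "t < t + 1" using t by auto
  show "\<And>y. 0 < y \<Longrightarrow> y < t + 1 \<Longrightarrow> ph (psi y) = y" using psi by blast
  show "isCont psi t" using psi_cont[OF t] .
qed

lemma comp_deriv:
  assumes G: "\<And>u. u > 0 \<Longrightarrow> DERIV G u :> H u * dph u" and t: "t > 0"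
  shows "DERIV (\<lambda>t. G (psi t)) t :> H (psi t)"
proof -
  have p: "psi t > 0" using psi[OF t] by simp
  have "DERIV (\<lambda>t. G (psi t)) t :> H (psi t) * dph (psi t) * inverse (dph (psi t))"
    using DERIV_chain2[OF G[OF p] psi_deriv[OF t]] .
  moreover have "H (psi t) * dph (psi t) * inverse (dph (psi t)) = H (psi t)"
    using dph_pos[OF p] by simp
  ultimately show ?thesis by simp
qed

lemma Fu_eq: assumes u: "u > 0"
  shows "- ln (Lu u) - 2 * ph u - ph u * ln (1 - 4 * Lu u) = Fu2 u"
proof -
  have s: "sinh u > 0" using u by simp
  have c: "cosh u > 0" by simp
  have l1: "ln (Lu u) = - ln 4 - 2 * ln (cosh u)"
    unfolding Lu_def using c by (simp add: ln_div ln_mult ln_realpow)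
  have l2: "ln (1 - 4 * Lu u) = 2 * (ln (sinh u) - ln (cosh u))"
    unfolding one_minus_Lu tanh_def using s c by (simp add: ln_div ln_realpow power_divide)
  show ?thesis unfolding Fu2_def l1 l2 by simp
qed

lemma fF_eq: assumes t: "t > 0" shows "fF t = Fu2 (psi t)"
proof -
  have p: "psi t > 0" "ph (psi t) = t" using psi[OF t] by auto
  show ?thesis unfolding fF_def lam_eq[OF t] using Fu_eq[OF p(1)] p(2) by simp
qed

lemma Ju_eq: assumes u: "u > 0"
  shows "- (1/2) * ln (1 - 4 * (ph u + 1) * Lu u) + (1/2) * ln 2 = Ju2 u"
proof -
  have s: "sinh u > 0" using u by simp
  have c: "cosh u > 0" by simp
  have D: "Dd u > 0" using Dd_pos[OF u] .
  have "1 - 4 * (ph u + 1) * Lu u = Dd u / (sinh u * cosh u)"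
    unfolding ph_def Lu_def Dd_def using s c by (simp add: field_simps power2_eq_square)
  then have "ln (1 - 4 * (ph u + 1) * Lu u) = ln (Dd u) - ln (sinh u) - ln (cosh u)"
    using s c D by (simp add: ln_div ln_mult)
  then show ?thesis unfolding Ju2_def by simp
qed

lemma jJ_eq: assumes t: "t > 0" shows "jJ t = Ju2 (psi t)"
proof -
  have p: "psi t > 0" "ph (psi t) = t" using psi[OF t] by auto
  show ?thesis unfolding jJ_def lam_eq[OF t] using Ju_eq[OF p(1)] p(2) by simp
qed

definition f1 :: "real \<Rightarrow> real" where "f1 t = f1u (psi t)"
definition f2 :: "real \<Rightarrow> real" where "f2 t = f2u (psi t)"
definition f3 :: "real \<Rightarrow> real" where "f3 t = f3u (psi t)"
definition j1 :: "real \<Rightarrow> real" where "j1 t = j1u (psi t)"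
definition j2 :: "real \<Rightarrow> real" where "j2 t = j2u (psi t)"

lemma fF_deriv: assumes t: "t > 0" shows "DERIV fF t :> f1 t"
proof -
  have "DERIV (\<lambda>t. Fu2 (psi t)) t :> f1u (psi t)" using comp_deriv[OF Fu2_deriv t] .
  then show ?thesis unfolding f1_def
    by (rule has_field_derivative_transform_within_open[where S = "{0<..}"]) (use t fF_eq in auto)
qed

lemma f1_deriv: "t > 0 \<Longrightarrow> DERIV f1 t :> f2 t"
  unfolding f1_def[abs_def] f2_def using comp_deriv[OF f1u_deriv] by blast

lemma f2_deriv: "t > 0 \<Longrightarrow> DERIV f2 t :> f3 t"
  unfolding f2_def[abs_def] f3_def using comp_deriv[OF f2u_deriv] by blast

lemma jJ_deriv: assumes t: "t > 0" shows "DERIV jJ t :> j1 t"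
proof -
  have "DERIV (\<lambda>t. Ju2 (psi t)) t :> j1u (psi t)" using comp_deriv[OF Ju2_deriv t] .
  then show ?thesis unfolding j1_def
    by (rule has_field_derivative_transform_within_open[where S = "{0<..}"]) (use t jJ_eq in auto)
qed

lemma j1_deriv: "t > 0 \<Longrightarrow> DERIV j1 t :> j2 t"
  unfolding j1_def[abs_def] j2_def using comp_deriv[OF j1u_deriv] by blast

lemma deriv_fF: "t > 0 \<Longrightarrow> deriv fF t = f1 t"
  using fF_deriv DERIV_imp_deriv by blast

lemma deriv_jJ: "t > 0 \<Longrightarrow> deriv jJ t = j1 t"
  using jJ_deriv DERIV_imp_deriv by blast

lemma deriv2_fF: assumes t: "t > 0" shows "deriv (deriv fF) t = f2 t"
proof -
  have "DERIV (deriv fF) t :> f2 t"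
    using f1_deriv[OF t]
    by (rule has_field_derivative_transform_within_open[where S = "{0<..}"]) (use t deriv_fF in auto)
  then show ?thesis using DERIV_imp_deriv by blast
qed

lemma exp_f1: assumes t: "t > 0" shows "exp (- f1 t) = tanh (psi t) ^ 2"
proof -
  define u where "u = psi t"
  have u: "u > 0" using psi[OF t] by (simp add: u_def)
  have s: "sinh u > 0" using u by simp
  define y where "y = sinh u / cosh u"
  have y: "y > 0" using s by (simp add: y_def)
  have "exp (- f1u u) = exp (ln y + ln y)"
    unfolding f1u_def y_def using s by (simp add: ln_div)
  also have "\<dots> = exp (ln y) * exp (ln y)" by (rule exp_add)
  also have "\<dots> = (sinh u / cosh u) ^ 2"
    using y by (simp add: power2_eq_square y_def)
  finally show ?thesis by (simp add: f1_def u_def tanh_def)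
qed

definition f2s :: "real \<Rightarrow> real" where "f2s u = -2 * sinh u / (cosh u * Dd u)"
definition f3s :: "real \<Rightarrow> real" where "f3s u = -2 * (Dd u - 2 * sinh u ^ 3 * cosh u) * sinh u ^ 2 / (cosh u ^ 2 * Dd u ^ 3)"
definition j1s :: "real \<Rightarrow> real" where "j1s u = -(1/2) * (u * (cosh u ^ 2 + sinh u ^ 2) - sinh u * cosh u) * sinh u / (Dd u ^ 2 * cosh u)"
definition j2s :: "real \<Rightarrow> real" where "j2s u = -(1/2) * ((4 * u * sinh u ^ 2 * cosh u + (u * (cosh u ^ 2 + sinh u ^ 2) - sinh u * cosh u) * cosh u) / (Dd u ^ 2 * cosh u)
   - (u * (cosh u ^ 2 + sinh u ^ 2) - sinh u * cosh u) * sinh u * (4 * sinh u ^ 2 * cosh u + Dd u * sinh u) / (Dd u ^ 3 * cosh u ^ 2)) * sinh u ^ 2 / Dd u"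

lemma f2u_eq: assumes u: "u > 0" shows "f2u u = f2s u"
proof -
  have s: "sinh u > 0" using u by simp
  have D: "Dd u > 0" using Dd_pos[OF u] .
  have c: "cosh u ^ 2 = sinh u ^ 2 + 1" by (rule cosh_square_eq)
  show ?thesis unfolding f2u_def f2s_def f1d_def dph_def using s D c
    by (simp add: field_simps power2_eq_square)
qed

lemma j1_alg:
  fixes s c d x :: real
  assumes "s > 0" "c > 0" "d > 0" "c * c = s * s + 1" "x = s * c - d"
  shows "-(1/2) * (2 * s ^ 2 / d - c / s - s / c) / (d / s ^ 2) = -(1/2) * (x * (c ^ 2 + s ^ 2) - s * c) * s / (d ^ 2 * c)"
proof -
  have "-(1/2) * (2 * s ^ 2 / d - c / s - s / c) / (d / s ^ 2) = -(1/2) * ((s * c - d) * (c ^ 2 + s ^ 2) - s * c) * s / (d ^ 2 * c)"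
    using assms(1-3) apply (simp add: field_simps power2_eq_square)
    using assms(4) apply algebra
    done
  then show ?thesis using assms(5) by simp
qed

lemma j1u_eq: assumes u: "u > 0" shows "j1u u = j1s u"
proof -
  have s: "sinh u > 0" using u by simp
  have D: "Dd u > 0" using Dd_pos[OF u] .
  have c: "cosh u * cosh u = sinh u * sinh u + 1" using cosh_square_eq[of u] by (simp add: power2_eq_square)
  show ?thesis unfolding j1u_def j1s_def j0d_def dph_def sD_def
    using j1_alg[OF s cosh_real_pos D c, of u] by (simp add: Dd_def)
qed

lemma f2s_deriv: assumes u: "u > 0" shows "DERIV f2s u :> f3s u * dph u"
proof -
  have s: "sinh u > 0" using u by simp
  have D: "Dd u > 0" using Dd_pos[OF u] .
  have c: "cosh u * cosh u = sinh u * sinh u + 1" using cosh_square_eq[of u] by (simp add: power2_eq_square)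
  show ?thesis unfolding f2s_def[abs_def] f3s_def dph_def using s D
    apply (auto intro!: derivative_eq_intros Dd_deriv' simp: sD_def)
    apply (simp add: field_simps power2_eq_square)
    using c apply algebra
    done
qed

lemma j1s_deriv: assumes u: "u > 0" shows "DERIV j1s u :> j2s u * dph u"
proof -
  have s: "sinh u > 0" using u by simp
  have D: "Dd u > 0" using Dd_pos[OF u] .
  show ?thesis unfolding j1s_def[abs_def] j2s_def dph_def using s D
    apply (auto intro!: derivative_eq_intros Dd_deriv' simp: sD_def)
    apply (simp add: field_simps power2_eq_square)
    apply algebra
    done
qed
lemma f3u_eq: assumes u: "u > 0" shows "f3u u = f3s u"
proof -
  have "DERIV f2u u :> f3s u * dph u"
    using f2s_deriv[OF u]
    by (rule has_field_derivative_transform_within_open[where S = "{0<..}"]) (use u f2u_eq in auto)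
  with f2u_deriv[OF u] have "f3u u * dph u = f3s u * dph u" by (rule DERIV_unique)
  then show ?thesis using dph_pos[OF u] by simp
qed

lemma j2u_eq: assumes u: "u > 0" shows "j2u u = j2s u"
proof -
  have "DERIV j1u u :> j2s u * dph u"
    using j1s_deriv[OF u]
    by (rule has_field_derivative_transform_within_open[where S = "{0<..}"]) (use u j1u_eq in auto)
  with j1u_deriv[OF u] have "j2u u * dph u = j2s u * dph u" by (rule DERIV_unique)
  then show ?thesis using dph_pos[OF u] by simp
qed

lemma bounded_0_top:
  fixes q :: "real \<Rightarrow> real"
  assumes c: "continuous_on {0<..} q" and b0: "q \<in> O[at_right 0](\<lambda>_. 1)"
    and bt: "q \<in> O[at_top](\<lambda>_. 1)"
  shows "\<exists>K. \<forall>u>0. \<bar>q u\<bar> \<le> K"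
proof -
  obtain c1 where "eventually (\<lambda>x. norm (q x) \<le> c1 * norm (1::real)) (at_right 0)"
    using b0 by (elim landau_o.bigE) auto
  then obtain a where a: "a > 0" "\<And>y. y > 0 \<Longrightarrow> y < a \<Longrightarrow> \<bar>q y\<bar> \<le> c1"
    unfolding eventually_at_right_field by auto
  obtain c2 where "eventually (\<lambda>x. norm (q x) \<le> c2 * norm (1::real)) at_top"
    using bt by (elim landau_o.bigE) auto
  then obtain N where N: "\<And>y. y \<ge> N \<Longrightarrow> \<bar>q y\<bar> \<le> c2"
    unfolding eventually_at_top_linorder by auto
  define B where "B = max a N"
  have "continuous_on {a..B} q" by (rule continuous_on_subset[OF c]) (use a(1) in auto)
  then have "compact (q ` {a..B})" by (intro compact_continuous_image) auto
  then obtain c3 where c3: "\<And>y. y \<in> q ` {a..B} \<Longrightarrow> norm y \<le> c3"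
    using compact_imp_bounded bounded_iff by metis
  show ?thesis
  proof (intro exI[of _ "max c1 (max c2 c3)"] allI impI)
    fix u :: real assume u: "u > 0"
    show "\<bar>q u\<bar> \<le> max c1 (max c2 c3)"
    proof (cases "u < a")
      case True then show ?thesis using a(2)[OF u] by simp
    next
      case False
      show ?thesis
      proof (cases "u \<ge> N")
        case True then show ?thesis using N by fastforce
      next
        case F2: False
        then have "u \<in> {a..B}" using False by (auto simp: B_def)
        then show ?thesis using c3[of "q u"] by fastforce
      qed
    qed
  qed
qed

lemma Dd_cont: "continuous_on S Dd" unfolding Dd_def by (intro continuous_intros)
lemma Dd_nz: "x > 0 \<Longrightarrow> Dd x \<noteq> 0" using Dd_pos by (metis less_irrefl)
lemma dph_nz: "x > 0 \<Longrightarrow> dph x \<noteq> 0" using dph_pos by (metis less_irrefl)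
lemma ph_cont': "continuous_on {0<..} ph" unfolding ph_def by (intro continuous_intros) auto
lemma dph_cont: "continuous_on {0<..} dph" unfolding dph_def by (intro continuous_intros Dd_cont) auto

lemma bo_f2_0: "(\<lambda>u. f2u u * ph u) \<in> O[at_right 0](\<lambda>_. 1)"
  unfolding f2u_def f1d_def dph_def Dd_def ph_def by real_asymp
lemma bo_f2_top: "(\<lambda>u. f2u u * ph u) \<in> O[at_top](\<lambda>_. 1)"
  unfolding f2u_def f1d_def dph_def Dd_def ph_def by real_asymp
lemma bo_f3_0: "(\<lambda>u. f3s u * ph u ^ 2) \<in> O[at_right 0](\<lambda>_. 1)"
  unfolding f3s_def Dd_def ph_def by real_asymp
lemma bo_f3_top: "(\<lambda>u. f3s u * ph u ^ 2) \<in> O[at_top](\<lambda>_. 1)"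
  unfolding f3s_def Dd_def ph_def by real_asymp
lemma bo_j1_0: "(\<lambda>u. j1s u * ph u) \<in> O[at_right 0](\<lambda>_. 1)"
  unfolding j1s_def Dd_def ph_def by real_asymp
lemma bo_j1_top: "(\<lambda>u. j1s u * ph u) \<in> O[at_top](\<lambda>_. 1)"
  unfolding j1s_def Dd_def ph_def by real_asymp
lemma bo_j2_0: "(\<lambda>u. j2s u * ph u ^ 2) \<in> O[at_right 0](\<lambda>_. 1)"
  unfolding j2s_def Dd_def ph_def by real_asymp
lemma bo_j2_top: "(\<lambda>u. j2s u * ph u ^ 2) \<in> O[at_top](\<lambda>_. 1)"
  unfolding j2s_def Dd_def ph_def by real_asymp
lemma bo_th_0: "(\<lambda>u. tanh u ^ 2 / ph u) \<in> O[at_right 0](\<lambda>_. 1)"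
  unfolding ph_def by real_asymp
lemma bo_th_top: "(\<lambda>u. tanh u ^ 2 / ph u) \<in> O[at_top](\<lambda>_. 1)"
  unfolding ph_def by real_asymp

lemma bnd_f2: "\<exists>K. \<forall>t>0. \<bar>f2 t\<bar> * t \<le> K"
proof -
  have "continuous_on {0<..} (\<lambda>u. f2u u * ph u)"
    unfolding f2u_def f1d_def by (intro continuous_intros Dd_cont dph_cont ph_cont') (auto simp: dph_nz)
  then obtain K where K: "\<And>u. u > 0 \<Longrightarrow> \<bar>f2u u * ph u\<bar> \<le> K"
    using bounded_0_top[OF _ bo_f2_0 bo_f2_top] by blast
  show ?thesis
  proof (intro exI[of _ K] allI impI)
    fix t :: real assume t: "t > 0"
    have p: "psi t > 0" "ph (psi t) = t" using psi[OF t] by auto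
    show "\<bar>f2 t\<bar> * t \<le> K" using K[OF p(1)] p t by (simp add: f2_def abs_mult)
  qed
qed

lemma bnd_f3: "\<exists>K. \<forall>t>0. \<bar>f3 t\<bar> * t ^ 2 \<le> K"
proof -
  have "continuous_on {0<..} (\<lambda>u. f3s u * ph u ^ 2)"
    unfolding f3s_def by (intro continuous_intros Dd_cont dph_cont ph_cont') (auto simp: Dd_nz)
  then obtain K where K: "\<And>u. u > 0 \<Longrightarrow> \<bar>f3s u * ph u ^ 2\<bar> \<le> K"
    using bounded_0_top[OF _ bo_f3_0 bo_f3_top] by blast
  show ?thesis
  proof (intro exI[of _ K] allI impI)
    fix t :: real assume t: "t > 0"
    have p: "psi t > 0" "ph (psi t) = t" using psi[OF t] by auto
    show "\<bar>f3 t\<bar> * t ^ 2 \<le> K" using K[OF p(1)] p t f3u_eq[OF p(1)] by (simp add: f3_def abs_mult)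
  qed
qed

lemma bnd_j1: "\<exists>K. \<forall>t>0. \<bar>j1 t\<bar> * t \<le> K"
proof -
  have "continuous_on {0<..} (\<lambda>u. j1s u * ph u)"
    unfolding j1s_def by (intro continuous_intros Dd_cont dph_cont ph_cont') (auto simp: Dd_nz)
  then obtain K where K: "\<And>u. u > 0 \<Longrightarrow> \<bar>j1s u * ph u\<bar> \<le> K"
    using bounded_0_top[OF _ bo_j1_0 bo_j1_top] by blast
  show ?thesis
  proof (intro exI[of _ K] allI impI)
    fix t :: real assume t: "t > 0"
    have p: "psi t > 0" "ph (psi t) = t" using psi[OF t] by auto
    show "\<bar>j1 t\<bar> * t \<le> K" using K[OF p(1)] p t j1u_eq[OF p(1)] by (simp add: j1_def abs_mult)
  qed
qed

lemma bnd_j2: "\<exists>K. \<forall>t>0. \<bar>j2 t\<bar> * t ^ 2 \<le> K"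
proof -
  have "continuous_on {0<..} (\<lambda>u. j2s u * ph u ^ 2)"
    unfolding j2s_def by (intro continuous_intros Dd_cont dph_cont ph_cont') (auto simp: Dd_nz)
  then obtain K where K: "\<And>u. u > 0 \<Longrightarrow> \<bar>j2s u * ph u ^ 2\<bar> \<le> K"
    using bounded_0_top[OF _ bo_j2_0 bo_j2_top] by blast
  show ?thesis
  proof (intro exI[of _ K] allI impI)
    fix t :: real assume t: "t > 0"
    have p: "psi t > 0" "ph (psi t) = t" using psi[OF t] by auto
    show "\<bar>j2 t\<bar> * t ^ 2 \<le> K" using K[OF p(1)] p t j2u_eq[OF p(1)] by (simp add: j2_def abs_mult)
  qed
qed

lemma bnd_sig: "\<exists>K. \<forall>t>0. exp (- f1 t) \<le> K * t"
proof -
  have "continuous_on {0<..} (\<lambda>u. tanh u ^ 2 / ph u)"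
    by (intro continuous_intros ph_cont') (auto dest: ph_pos)
  then obtain K where K: "\<And>u. u > 0 \<Longrightarrow> \<bar>tanh u ^ 2 / ph u\<bar> \<le> K"
    using bounded_0_top[OF _ bo_th_0 bo_th_top] by blast
  show ?thesis
  proof (intro exI[of _ K] allI impI)
    fix t :: real assume t: "t > 0"
    have p: "psi t > 0" "ph (psi t) = t" using psi[OF t] by auto
    have "tanh (psi t) ^ 2 / t \<le> K" using K[OF p(1)] p t by simp
    then show "exp (- f1 t) \<le> K * t" using t exp_f1[OF t] by (simp add: field_simps)
  qed
qed

lemma sig_le1: "t > 0 \<Longrightarrow> exp (- f1 t) \<le> 1"
proof -
  assume t: "t > 0"
  have "\<bar>tanh (psi t)\<bar> \<le> 1" using tanh_real_lt_1[of "psi t"] tanh_real_gt_neg1[of "psi t"] by simp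
  then have "\<bar>tanh (psi t)\<bar> ^ 2 \<le> 1" using power_le_one[OF abs_ge_zero, of "tanh (psi t)" 2] by simp
  then have "tanh (psi t) ^ 2 \<le> 1" by simp
  then show ?thesis using exp_f1[OF t] by simp
qed

definition rho :: "real \<Rightarrow> real" where "rho y = 1 + (y - 1/2) * ln ((y - 1) / y)"

lemma bo_rho: "(\<lambda>y. rho y * y ^ 2) \<in> O[at_top](\<lambda>_. 1)"
  unfolding rho_def by real_asymp

lemma bounded_ge_top:
  fixes q :: "real \<Rightarrow> real"
  assumes c: "continuous_on {a..} q" and bt: "q \<in> O[at_top](\<lambda>_. 1)"
  shows "\<exists>K. \<forall>u\<ge>a. \<bar>q u\<bar> \<le> K"
proof -
  obtain c2 where "eventually (\<lambda>x. norm (q x) \<le> c2 * norm (1::real)) at_top"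
    using bt by (elim landau_o.bigE) auto
  then obtain N where N: "\<And>y. y \<ge> N \<Longrightarrow> \<bar>q y\<bar> \<le> c2"
    unfolding eventually_at_top_linorder by auto
  define B where "B = max a N"
  have "continuous_on {a..B} q" by (rule continuous_on_subset[OF c]) auto
  then have "compact (q ` {a..B})" by (intro compact_continuous_image) auto
  then obtain c3 where c3: "\<And>y. y \<in> q ` {a..B} \<Longrightarrow> norm y \<le> c3"
    using compact_imp_bounded bounded_iff by metis
  show ?thesis
  proof (intro exI[of _ "max c2 c3"] allI impI)
    fix u :: real assume u: "u \<ge> a"
    show "\<bar>q u\<bar> \<le> max c2 c3"
    proof (cases "u \<ge> N")
      case True then show ?thesis using N by fastforce
    next
      case False
      then have "u \<in> {a..B}" using u by (auto simp: B_def)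
      then show ?thesis using c3[of "q u"] by fastforce
    qed
  qed
qed

lemma bnd_rho: "\<exists>K. \<forall>y\<ge>2. \<bar>rho y\<bar> * y ^ 2 \<le> K"
proof -
  have "continuous_on {2..} (\<lambda>y. rho y * y ^ 2)"
    unfolding rho_def by (intro continuous_intros) (auto simp: field_simps)
  then obtain K where K: "\<And>y. y \<ge> 2 \<Longrightarrow> \<bar>rho y * y ^ 2\<bar> \<le> K"
    using bounded_ge_top[OF _ bo_rho] by blast
  then show ?thesis by (auto simp: abs_mult)
qed

lemma exp_rho: assumes m: "m \<ge> (1::nat)"
  shows "exp (rho (real m + 1)) = exp 1 * (real m / (real m + 1)) ^ m * sqrt (real m / (real m + 1))"
proof -
  define M where "M = real m"
  have M: "M \<ge> 1" using m by (simp add: M_def)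
  define q where "q = M / (M + 1)"
  have q: "q > 0" using M by (simp add: q_def)
  have r: "rho (M + 1) = 1 + real m * ln q + ln q / 2"
    unfolding rho_def q_def by (simp add: M_def algebra_simps)
  have "exp (ln q / 2) = sqrt q"
  proof -
    have "exp (ln q / 2) ^ 2 = q" using q
      by (simp add: power2_eq_square exp_add[symmetric])
    then show ?thesis by (metis exp_ge_zero real_sqrt_unique less_eq_real_def)
  qed
  moreover have "exp (real m * ln q) = q ^ m" using q by (simp add: exp_of_nat_mult)
  ultimately have "exp (rho (M + 1)) = exp 1 * q ^ m * sqrt q"
    unfolding r by (simp add: exp_add)
  then show ?thesis by (simp add: q_def M_def)
qed

lemma ratio_alg:
  fixes s1 s2 pm pm1 P em e fm M :: real
  assumes "s1 > 0" "s2 > 0" "pm > 0" "pm1 > 0" "P > 0" "em > 0" "e > 0" "fm > 0" "M > 0"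
  shows "s1 * pm / (P * em * fm) = (e * (pm / pm1) * (s1 / s2)) * (s2 * (pm1 * (M + 1)) / (P * (em * e) * ((M + 1) * fm)))"
proof -
  define K where "K = M + 1"
  have "K > 0" using assms by (simp add: K_def)
  then have "s1 * pm / (P * em * fm) = (e * (pm / pm1) * (s1 / s2)) * (s2 * (pm1 * K) / (P * (em * e) * (K * fm)))"
    using assms by (simp add: field_simps)
  then show ?thesis by (simp add: K_def)
qed

lemma beta_eq:
  assumes n: "n \<ge> (1::nat)" and g: "g \<ge> (2::nat)"
  shows "beta n g = exp (rho (real g)) *
    exp (real n * (fF ((real g - 1) / real n) - fF (real g / real n)) +
         (jJ ((real g - 1) / real n) - jJ (real g / real n)))"
proof -
  obtain m where gm: "g = Suc m" and m: "m \<ge> 1" using g by (cases g) auto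
  define M where "M = real m"
  define N where "N = real n"
  have M: "M \<ge> 1" using m by (simp add: M_def)
  have N: "N \<ge> 1" using n by (simp add: N_def)
  define e1 where "e1 = exp (N * fF (M / N) + jJ (M / N))"
  define e2 where "e2 = exp (N * fF ((M + 1) / N) + jJ ((M + 1) / N))"
  define a1 where "a1 = sqrt M * M ^ m / (sqrt (2 * pi) * exp M * fact m)"
  define a2 where "a2 = sqrt (M + 1) * ((M + 1) ^ m * (M + 1)) / (sqrt (2 * pi) * (exp M * exp 1) * ((M + 1) * fact m))"
  define Q where "Q = N ^ (2 * m - 2)"
  have O1: "Omega n m = a1 * Q * e1" unfolding a1_def Q_def
    unfolding Omega_def using m by (simp add: M_def N_def e1_def)
  have O2: "Omega n g = a2 * (Q * N ^ 2) * e2"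
  proof -
    have e: "2 * g - 2 = (2 * m - 2) + 2" using gm m by simp
    have "N ^ (2 * g - 2) = N ^ (2 * m - 2) * N ^ 2" by (simp only: e power_add)
    moreover have "(fact g :: real) = (M + 1) * fact m" using gm by (simp add: M_def)
    moreover have "exp (M + 1) = exp M * exp 1" by (simp add: exp_add)
    ultimately show ?thesis unfolding Omega_def a2_def Q_def using gm
      by (simp add: M_def N_def e2_def add.commute power2_eq_square)
  qed
  have er: "exp (rho (M + 1)) = exp 1 * (M / (M + 1)) ^ m * sqrt (M / (M + 1))"
    using exp_rho[OF m] by (simp add: M_def)
  have ex: "exp (N * (fF (M / N) - fF ((M + 1) / N)) + (jJ (M / N) - jJ ((M + 1) / N))) = e1 / e2"
    unfolding e1_def e2_def by (simp add: exp_diff[symmetric] algebra_simps)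
  have em: "exp (M + 1) = exp M * exp 1" by (simp add: exp_add)
  have sq: "sqrt (M / (M + 1)) = sqrt M / sqrt (M + 1)" by (simp add: real_sqrt_divide)
  have pw: "(M / (M + 1)) ^ m = M ^ m / (M + 1) ^ m" by (simp add: power_divide)
  have "beta n g = N ^ 2 * Omega n m / Omega n g" unfolding beta_def using gm by (simp add: N_def)
  also have "\<dots> = exp (rho (M + 1)) * (e1 / e2)"
  proof -
    have p: "e1 > 0" "e2 > 0" "sqrt M > 0" "sqrt (M + 1) > 0" "exp M > 0" "(fact m :: real) > 0"
      "sqrt (2 * pi) > 0" "N > 0" "M > 0" "M + 1 > 0" "M ^ m > 0" "(M + 1) ^ m > 0" "exp (1::real) > 0"
      using M N by (auto simp: e1_def e2_def exp_gt_zero)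
    have a12: "a1 = exp (rho (M + 1)) * a2"
      unfolding a1_def a2_def er sq pw
      by (rule ratio_alg) (use p in auto)
    have "a2 > 0" "Q > 0" using p by (auto simp: a2_def Q_def)
    then show ?thesis unfolding O1 O2 a12 using p
      by (simp add: field_simps)
  qed
  finally show ?thesis using gm ex by (simp add: M_def N_def add.commute)
qed

lemma taylor_f: assumes a: "0 < a" "a < b"
  shows "\<exists>\<xi>. a < \<xi> \<and> \<xi> < b \<and> fF a = fF b + f1 b * (a - b) + f2 b / 2 * (a - b) ^ 2 + f3 \<xi> / 6 * (a - b) ^ 3"
proof -
  define df where "df = (\<lambda>m::nat. if m = 0 then fF else if m = 1 then f1 else if m = 2 then f2 else f3)"
  have "\<exists>t. (if a < b then a < t \<and> t < b else b < t \<and> t < a) \<and>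
      fF a = (\<Sum>m<3. (df m b / fact m) * (a - b) ^ m) + (df 3 t / fact 3) * (a - b) ^ 3"
  proof (rule Taylor[of 3 df fF a b b a])
    show "\<forall>m t. m < 3 \<and> a \<le> t \<and> t \<le> b \<longrightarrow> DERIV (df m) t :> df (Suc m) t"
    proof (intro allI impI)
      fix m :: nat and t :: real assume h: "m < 3 \<and> a \<le> t \<and> t \<le> b"
      then have t: "t > 0" using a by simp
      have "m = 0 \<or> m = 1 \<or> m = 2" using h by auto
      then show "DERIV (df m) t :> df (Suc m) t"
        using fF_deriv[OF t] f1_deriv[OF t] f2_deriv[OF t] by (auto simp: df_def)
    qed
  qed (use a in \<open>auto simp: df_def\<close>)
  then obtain t where "a < t" "t < b" "fF a = (\<Sum>m<3. (df m b / fact m) * (a - b) ^ m) + (df 3 t / fact 3) * (a - b) ^ 3"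
    using a by auto
  then show ?thesis
    by (intro exI[of _ t]) (simp add: df_def eval_nat_numeral)
qed

lemma taylor_j: assumes a: "0 < a" "a < b"
  shows "\<exists>\<eta>. a < \<eta> \<and> \<eta> < b \<and> jJ a = jJ b + j1 b * (a - b) + j2 \<eta> / 2 * (a - b) ^ 2"
proof -
  define df where "df = (\<lambda>m::nat. if m = 0 then jJ else if m = 1 then j1 else j2)"
  have "\<exists>t. (if a < b then a < t \<and> t < b else b < t \<and> t < a) \<and>
      jJ a = (\<Sum>m<2. (df m b / fact m) * (a - b) ^ m) + (df 2 t / fact 2) * (a - b) ^ 2"
  proof (rule Taylor[of 2 df jJ a b b a])
    show "\<forall>m t. m < 2 \<and> a \<le> t \<and> t \<le> b \<longrightarrow> DERIV (df m) t :> df (Suc m) t"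
    proof (intro allI impI)
      fix m :: nat and t :: real assume h: "m < 2 \<and> a \<le> t \<and> t \<le> b"
      then have t: "t > 0" using a by simp
      have "m = 0 \<or> m = 1" using h by auto
      then show "DERIV (df m) t :> df (Suc m) t"
        using jJ_deriv[OF t] j1_deriv[OF t] by (auto simp: df_def)
    qed
  qed (use a in \<open>auto simp: df_def\<close>)
  then obtain t where "a < t" "t < b" "jJ a = (\<Sum>m<2. (df m b / fact m) * (a - b) ^ m) + (df 2 t / fact 2) * (a - b) ^ 2"
    using a by auto
  then show ?thesis
    by (intro exI[of _ t]) (simp add: df_def eval_nat_numeral)
qed

lemma exp_taylor_bound: fixes x :: real shows "\<bar>exp x - 1 - x\<bar> \<le> x ^ 2 * exp \<bar>x\<bar>"
proof -
  obtain t where t: "\<bar>t\<bar> \<le> \<bar>x\<bar>" "exp x = (\<Sum>m<2. x ^ m / fact m) + exp t / fact 2 * x ^ 2"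
    using Maclaurin_exp_le[of x 2] by blast
  have e1: "exp x - 1 - x = exp t / 2 * x ^ 2" using t(2) by (simp add: eval_nat_numeral)
  have "exp t \<le> exp \<bar>x\<bar>" using t(1) by simp
  then have le: "exp t / 2 \<le> exp \<bar>x\<bar>" using exp_gt_zero[of t] by linarith
  have a: "\<bar>exp x - 1 - x\<bar> = exp t / 2 * x ^ 2" unfolding e1 by (simp add: abs_mult)
  have "exp t / 2 * x ^ 2 \<le> exp \<bar>x\<bar> * x ^ 2" by (rule mult_right_mono[OF le]) simp
  then show ?thesis unfolding a by (simp add: mult.commute)
qed

lemma final_ineq:
  fixes N G x s Ks :: real
  assumes N: "N \<ge> 2" and G: "G \<ge> 1" and x: "x = N + G" and Ks: "Ks \<ge> 0"
    and s0: "s \<ge> 0" and s1: "s \<le> 1" and sK: "s \<le> Ks * (G / N)"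
    and th: "G / N \<ge> x powr (-2/3)"
  shows "s / G ^ 2 \<le> 4 * max 1 Ks * x powr (-4/3)"
proof -
  define P where "P = x powr (-2/3)"
  have xpos: "x > 0" using N G x by simp
  have x1: "x \<ge> 1" using N G x by simp
  have P0: "P > 0" using xpos by (simp add: P_def)
  have P2: "P ^ 2 = x powr (-4/3)"
    unfolding P_def using xpos by (simp add: powr_power)
  have P3: "P ^ 3 * x ^ 2 = 1"
  proof -
    have "P ^ 3 = x powr (-2)" unfolding P_def using xpos by (simp add: powr_power)
    also have "\<dots> = 1 / x ^ 2" using xpos by (simp add: powr_minus_divide powr_numeral)
    finally show ?thesis using xpos by simp
  qed
  have P1: "P \<le> 1" unfolding P_def using powr_mono[of "-2/3" 0 x] x1 by simp
  have "P ^ 3 \<le> P ^ 2" using P0 P1 by (simp add: power_decreasing)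
  have Npos: "N > 0" "G > 0" using N G by auto
  show ?thesis
  proof (cases "G \<le> N")
    case True
    have GP: "G \<ge> P * N" using th Npos by (simp add: P_def field_simps)
    have "x \<le> 2 * N" using True x by simp
    then have "x ^ 2 \<le> (2 * N) ^ 2" using xpos by (intro power_mono) auto
    then have x2: "x ^ 2 \<le> 4 * N ^ 2" by (simp add: power_mult_distrib)
    have "1 = P ^ 3 * x ^ 2" using P3 by simp
    also have "\<dots> \<le> P ^ 3 * (4 * N ^ 2)" using x2 P0 by (intro mult_left_mono) auto
    also have "\<dots> = 4 * P ^ 2 * (N * (P * N))" by (simp add: power2_eq_square power3_eq_cube)
    also have "\<dots> \<le> 4 * P ^ 2 * (N * G)" using GP P0 Npos by (intro mult_left_mono) auto
    finally have key: "1 \<le> 4 * P ^ 2 * (N * G)" .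
    have "s / G ^ 2 \<le> Ks * (G / N) / G ^ 2" using sK by (intro divide_right_mono) auto
    also have "\<dots> = Ks / (N * G)" using Npos by (simp add: field_simps power2_eq_square)
    also have "\<dots> \<le> Ks * (4 * P ^ 2)"
    proof -
      have NG: "N * G > 0" using Npos by simp
      have "1 / (N * G) \<le> 4 * P ^ 2" using key NG by (simp add: divide_le_eq)
      then have "Ks * (1 / (N * G)) \<le> Ks * (4 * P ^ 2)" using Ks by (rule mult_left_mono)
      then show ?thesis by simp
    qed
    also have "\<dots> \<le> 4 * max 1 Ks * P ^ 2" using P0 by (simp add: mult_right_mono)
    finally show ?thesis by (simp add: P2)
  next
    case False
    have "x \<le> 2 * G" using False x by simp
    then have "x ^ 2 \<le> (2 * G) ^ 2" using xpos by (intro power_mono) auto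
    then have x2: "x ^ 2 \<le> 4 * G ^ 2" by (simp add: power_mult_distrib)
    have "s / G ^ 2 \<le> 1 / G ^ 2" using s1 by (intro divide_right_mono) auto
    also have "\<dots> \<le> 4 / x ^ 2" using x2 xpos Npos by (simp add: field_simps)
    also have "\<dots> = 4 * P ^ 3" using P3 xpos by (simp add: field_simps)
    also have "\<dots> \<le> 4 * P ^ 2" using \<open>P ^ 3 \<le> P ^ 2\<close> by simp
    also have "\<dots> \<le> 4 * max 1 Ks * P ^ 2" using P0 by (simp add: mult_right_mono)
    finally show ?thesis by (simp add: P2)
  qed
qed

lemma abs3: fixes x y z :: real shows "\<bar>x - y + z\<bar> \<le> \<bar>x\<bar> + \<bar>y\<bar> + \<bar>z\<bar>"
  by arith

lemma main_bound:
  fixes n g :: nat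
  assumes Kf2: "\<forall>t>0. \<bar>f2 t\<bar> * t \<le> Kf2" and Kf3: "\<forall>t>0. \<bar>f3 t\<bar> * t ^ 2 \<le> Kf3"
    and Kj1: "\<forall>t>0. \<bar>j1 t\<bar> * t \<le> Kj1" and Kj2: "\<forall>t>0. \<bar>j2 t\<bar> * t ^ 2 \<le> Kj2"
    and Kr: "\<forall>y\<ge>2. \<bar>rho y\<bar> * y ^ 2 \<le> Kr"
    and n: "n \<ge> 2" and g: "g \<ge> 2"
    and A1: "A1 = Kr + Kf3 + 2 * Kj2" and A2: "A2 = Kf2 / 2 + Kj1 + A1"
  shows "\<bar>beta n g - exp (- f1 (real g / real n)) - exp (- f1 (real g / real n)) / real n
            * (f2 (real g / real n) / 2 - j1 (real g / real n))\<bar>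
         \<le> exp (- f1 (real g / real n)) * ((A2 ^ 2 * exp A2 + A1) / (real g) ^ 2)"
proof -
  define N where "N = real n"
  define G where "G = real g"
  have N: "N \<ge> 2" using n by (simp add: N_def)
  have G: "G \<ge> 2" using g by (simp add: G_def)
  define th where "th = G / N"
  define th' where "th' = (G - 1) / N"
  have th: "th > 0" "th' > 0" "th' < th" using N G by (auto simp: th_def th'_def divide_strict_right_mono)
  have d: "th' - th = - 1 / N" using N by (simp add: th_def th'_def field_simps)
  have thN: "th * N = G" using N by (simp add: th_def)
  have th2: "th' \<ge> th / 2" using N G by (simp add: th_def th'_def field_simps)
  obtain xi where xi: "th' < xi" "xi < th"
    "fF th' = fF th + f1 th * (th' - th) + f2 th / 2 * (th' - th) ^ 2 + f3 xi / 6 * (th' - th) ^ 3"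
    using taylor_f[OF th(2) th(3)] by blast
  obtain eta where eta: "th' < eta" "eta < th"
    "jJ th' = jJ th + j1 th * (th' - th) + j2 eta / 2 * (th' - th) ^ 2"
    using taylor_j[OF th(2) th(3)] by blast
  define E where "E = rho G + f2 th / (2 * N) - f3 xi / (6 * N ^ 2) - j1 th / N + j2 eta / (2 * N ^ 2)"
  define a where "a = (f2 th / 2 - j1 th) / N"
  define s where "s = exp (- f1 th)"
  have X: "N * (fF th' - fF th) + (jJ th' - jJ th) = - f1 th + (E - rho G)"
    unfolding xi(3) eta(3) d E_def using N
    by (simp add: field_simps power2_eq_square power3_eq_cube)
  have beta: "beta n g = s * exp E"
  proof -
    have "beta n g = exp (rho G) * exp (N * (fF th' - fF th) + (jJ th' - jJ th))"
      using beta_eq[of n g] n g by (simp add: N_def G_def th_def th'_def)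
    also have "\<dots> = exp (rho G) * exp (- f1 th + (E - rho G))" unfolding X ..
    also have "\<dots> = s * exp E" unfolding s_def mult_exp_exp by simp
    finally show ?thesis .
  qed
  have Kf3': "\<bar>f3 xi\<bar> * th ^ 2 \<le> 4 * Kf3"
  proof -
    have xi0: "xi > 0" using xi th by simp
    have "th ^ 2 \<le> (2 * xi) ^ 2" using th2 xi th by (intro power_mono) auto
    then have "\<bar>f3 xi\<bar> * th ^ 2 \<le> \<bar>f3 xi\<bar> * (4 * xi ^ 2)" by (intro mult_left_mono) (auto simp: power_mult_distrib)
    also have "\<dots> \<le> 4 * Kf3" using Kf3 xi0 by simp
    finally show ?thesis .
  qed
  have Kj2': "\<bar>j2 eta\<bar> * th ^ 2 \<le> 4 * Kj2"
  proof -
    have e0: "eta > 0" using eta th by simp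
    have "th ^ 2 \<le> (2 * eta) ^ 2" using th2 eta th by (intro power_mono) auto
    then have "\<bar>j2 eta\<bar> * th ^ 2 \<le> \<bar>j2 eta\<bar> * (4 * eta ^ 2)" by (intro mult_left_mono) (auto simp: power_mult_distrib)
    also have "\<dots> \<le> 4 * Kj2" using Kj2 e0 by simp
    finally show ?thesis .
  qed
  have Kr': "\<bar>rho G\<bar> * G ^ 2 \<le> Kr" using Kr G by simp
  have G2: "G ^ 2 / N ^ 2 = th ^ 2" using N by (simp add: th_def power_divide)
  have Kf3nn: "Kf3 \<ge> 0"
  proof -
    have "\<bar>f3 th\<bar> * th ^ 2 \<le> Kf3" using Kf3 th by simp
    moreover have "0 \<le> \<bar>f3 th\<bar> * th ^ 2" by simp
    ultimately show ?thesis by linarith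
  qed
  have Kj2nn: "Kj2 \<ge> 0"
  proof -
    have "\<bar>j2 th\<bar> * th ^ 2 \<le> Kj2" using Kj2 th by simp
    moreover have "0 \<le> \<bar>j2 th\<bar> * th ^ 2" by simp
    ultimately show ?thesis by linarith
  qed
  have EA: "\<bar>E - a\<bar> * G ^ 2 \<le> A1"
  proof -
    have eq: "(E - a) * G ^ 2 = rho G * G ^ 2 - f3 xi * (G ^ 2 / N ^ 2) / 6 + j2 eta * (G ^ 2 / N ^ 2) / 2"
      unfolding E_def a_def using N by (simp add: field_simps)
    have "\<bar>E - a\<bar> * G ^ 2 = \<bar>(E - a) * G ^ 2\<bar>" by (simp add: abs_mult)
    also have "\<dots> \<le> \<bar>rho G * G ^ 2\<bar> + \<bar>f3 xi * (G ^ 2 / N ^ 2) / 6\<bar> + \<bar>j2 eta * (G ^ 2 / N ^ 2) / 2\<bar>"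
      unfolding eq by (rule abs3)
    also have "\<dots> = \<bar>rho G\<bar> * G ^ 2 + \<bar>f3 xi\<bar> * th ^ 2 / 6 + \<bar>j2 eta\<bar> * th ^ 2 / 2"
      unfolding G2 by (simp add: abs_mult)
    also have "\<dots> \<le> Kr + 4 * Kf3 / 6 + 4 * Kj2 / 2" using Kr' Kf3' Kj2' by linarith
    also have "\<dots> \<le> A1" unfolding A1 using Kf3nn by linarith
    finally show ?thesis .
  qed
  have aG: "\<bar>a\<bar> * G \<le> Kf2 / 2 + Kj1"
  proof -
    have "a * G = f2 th * th / 2 - j1 th * th" unfolding a_def using N by (simp add: th_def field_simps)
    moreover have "\<bar>a\<bar> * G = \<bar>a * G\<bar>" using G by (simp add: abs_mult)
    ultimately have "\<bar>a\<bar> * G \<le> \<bar>f2 th * th / 2\<bar> + \<bar>j1 th * th\<bar>" by (simp add: abs_triangle_ineq4)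
    also have "\<dots> = \<bar>f2 th\<bar> * th / 2 + \<bar>j1 th\<bar> * th" using th by (simp add: abs_mult)
    also have "\<dots> \<le> Kf2 / 2 + Kj1"
    proof -
      have "\<bar>f2 th\<bar> * th \<le> Kf2" "\<bar>j1 th\<bar> * th \<le> Kj1" using Kf2 Kj1 th by auto
      then show ?thesis by linarith
    qed
    finally show ?thesis .
  qed
  have A1pos: "A1 \<ge> 0"
  proof -
    have "0 \<le> \<bar>E - a\<bar> * G ^ 2" by simp
    then show ?thesis using EA by linarith
  qed
  have EG: "\<bar>E\<bar> * G \<le> A2"
  proof -
    have "\<bar>E - a\<bar> * G \<le> \<bar>E - a\<bar> * G ^ 2" using G by (intro mult_left_mono) (auto simp: power2_eq_square)
    then have 1: "\<bar>E - a\<bar> * G \<le> A1" using EA by linarith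
    have "\<bar>E\<bar> \<le> \<bar>a\<bar> + \<bar>E - a\<bar>" by linarith
    then have "\<bar>E\<bar> * G \<le> (\<bar>a\<bar> + \<bar>E - a\<bar>) * G" using G by (intro mult_right_mono) auto
    then have "\<bar>E\<bar> * G \<le> \<bar>a\<bar> * G + \<bar>E - a\<bar> * G" by (simp add: distrib_right)
    then show ?thesis using 1 aG A2 by linarith
  qed
  have E1: "\<bar>E\<bar> \<le> A2"
  proof -
    have "\<bar>E\<bar> * 1 \<le> \<bar>E\<bar> * G" using G by (intro mult_left_mono) auto
    then show ?thesis using EG by linarith
  qed
  have EE: "\<bar>exp E - 1 - E\<bar> * G ^ 2 \<le> A2 ^ 2 * exp A2"
  proof -
    have "\<bar>exp E - 1 - E\<bar> \<le> E ^ 2 * exp \<bar>E\<bar>" by (rule exp_taylor_bound)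
    also have "\<dots> \<le> E ^ 2 * exp A2" using E1 by (intro mult_left_mono) auto
    finally have "\<bar>exp E - 1 - E\<bar> * G ^ 2 \<le> E ^ 2 * exp A2 * G ^ 2" using G by (intro mult_right_mono) auto
    also have "\<dots> = (\<bar>E\<bar> * G) ^ 2 * exp A2" by (simp add: power_mult_distrib)
    also have "\<dots> \<le> A2 ^ 2 * exp A2" using EG G by (intro mult_right_mono power_mono) auto
    finally show ?thesis .
  qed
  have tot: "\<bar>exp E - 1 - a\<bar> * G ^ 2 \<le> A2 ^ 2 * exp A2 + A1"
  proof -
    have "\<bar>exp E - 1 - a\<bar> \<le> \<bar>exp E - 1 - E\<bar> + \<bar>E - a\<bar>" by linarith
    then have "\<bar>exp E - 1 - a\<bar> * G ^ 2 \<le> (\<bar>exp E - 1 - E\<bar> + \<bar>E - a\<bar>) * G ^ 2" by (intro mult_right_mono) auto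
    then show ?thesis using EE EA by (simp add: distrib_right)
  qed
  have Gp: "G ^ 2 > 0" using G by simp
  have "\<bar>exp E - 1 - a\<bar> \<le> (A2 ^ 2 * exp A2 + A1) / G ^ 2" using tot Gp by (simp add: le_divide_eq)
  then have fin: "s * \<bar>exp E - 1 - a\<bar> \<le> s * ((A2 ^ 2 * exp A2 + A1) / G ^ 2)"
    by (intro mult_left_mono) (auto simp: s_def)
  have "beta n g - s - s / N * (f2 th / 2 - j1 th) = s * (exp E - 1 - a)"
    unfolding beta a_def using N by (simp add: field_simps)
  then have "\<bar>beta n g - s - s / N * (f2 th / 2 - j1 th)\<bar> = s * \<bar>exp E - 1 - a\<bar>"
    by (simp add: abs_mult s_def)
  with fin show ?thesis by (simp add: s_def th_def N_def G_def)
qed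

lemma g1_n2:
  fixes n :: nat
  assumes n: "n \<ge> 2" and c: "real 1 / real n \<ge> (real n + real 1) powr (-2/3)"
  shows "n = 2"
proof (rule ccontr)
  assume "n \<noteq> 2"
  then have n3: "n \<ge> 3" using n by simp
  define N where "N = real n"
  have N3: "N \<ge> 3" using n3 by (simp add: N_def)
  define x where "x = N + 1"
  have xpos: "x > 0" using N3 by (simp add: x_def)
  define P where "P = x powr (-2/3)"
  have P0: "P \<ge> 0" by (simp add: P_def)
  have P3: "P ^ 3 = 1 / x ^ 2"
  proof -
    have "P ^ 3 = x powr (-2)" unfolding P_def using xpos by (simp add: powr_power)
    also have "\<dots> = 1 / x ^ 2" using xpos by (simp add: powr_minus_divide powr_numeral)
    finally show ?thesis .
  qed
  have "P \<le> 1 / N" using c by (simp add: P_def x_def N_def)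
  then have "P ^ 3 \<le> (1 / N) ^ 3" using P0 by (intro power_mono) auto
  then have "1 / x ^ 2 \<le> 1 / N ^ 3" by (simp add: P3 power_divide)
  then have le: "N ^ 3 \<le> x ^ 2" using N3 xpos by (simp add: divide_simps)
  have "x ^ 2 = N ^ 2 + 2 * N + 1" by (simp add: x_def power2_eq_square algebra_simps)
  also have "\<dots> < 3 * N ^ 2"
  proof -
    have h: "3 * (2 * N) \<le> N * (2 * N)" using N3 by (intro mult_right_mono) auto
    have "N * (2 * N) = 2 * N ^ 2" by (simp add: power2_eq_square)
    then show ?thesis using h N3 by linarith
  qed
  also have "\<dots> \<le> N * N ^ 2" using N3 by (intro mult_right_mono) auto
  also have "\<dots> = N ^ 3" by (simp add: power2_eq_square power3_eq_cube)
  finally show False using le by simp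
qed

theorem lemma5:
  "\<exists>C>0. \<forall>n g :: nat. n \<ge> 2 \<longrightarrow> g \<ge> 1 \<longrightarrow>
     real g / real n \<ge> (real n + real g) powr (-2/3) \<longrightarrow>
     \<bar>beta n g - exp (- deriv fF (real g / real n))
        - exp (- deriv fF (real g / real n)) / real n
          * (deriv (deriv fF) (real g / real n) / 2 - deriv jJ (real g / real n))\<bar>
     \<le> C * (real n + real g) powr (-4/3)"
proof -
  obtain Kf2 where Kf2: "\<forall>t>0. \<bar>f2 t\<bar> * t \<le> Kf2" using bnd_f2 by blast
  obtain Kf3 where Kf3: "\<forall>t>0. \<bar>f3 t\<bar> * t ^ 2 \<le> Kf3" using bnd_f3 by blast
  obtain Kj1 where Kj1: "\<forall>t>0. \<bar>j1 t\<bar> * t \<le> Kj1" using bnd_j1 by blast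
  obtain Kj2 where Kj2: "\<forall>t>0. \<bar>j2 t\<bar> * t ^ 2 \<le> Kj2" using bnd_j2 by blast
  obtain Kr where Kr: "\<forall>y\<ge>2. \<bar>rho y\<bar> * y ^ 2 \<le> Kr" using bnd_rho by blast
  obtain Ks where Ks: "\<forall>t>0. exp (- f1 t) \<le> Ks * t" using bnd_sig by blast
  have Ksnn: "Ks \<ge> 0"
  proof -
    have "exp (- f1 1) \<le> Ks * 1" using Ks[rule_format, of 1] by simp
    moreover have "exp (- f1 1) > 0" by simp
    ultimately show ?thesis by linarith
  qed
  have Kf2nn: "Kf2 \<ge> 0"
  proof -
    have "\<bar>f2 1\<bar> \<le> Kf2" using Kf2[rule_format, of 1] by simp
    then show ?thesis using abs_ge_zero[of "f2 1"] by linarith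
  qed
  have Kj1nn: "Kj1 \<ge> 0"
  proof -
    have "\<bar>j1 1\<bar> \<le> Kj1" using Kj1[rule_format, of 1] by simp
    then show ?thesis using abs_ge_zero[of "j1 1"] by linarith
  qed
  have Kf3nn: "Kf3 \<ge> 0"
  proof -
    have "\<bar>f3 1\<bar> \<le> Kf3" using Kf3[rule_format, of 1] by simp
    then show ?thesis using abs_ge_zero[of "f3 1"] by linarith
  qed
  have Kj2nn: "Kj2 \<ge> 0"
  proof -
    have "\<bar>j2 1\<bar> \<le> Kj2" using Kj2[rule_format, of 1] by simp
    then show ?thesis using abs_ge_zero[of "j2 1"] by linarith
  qed
  have Krnn: "Kr \<ge> 0"
  proof -
    have "\<bar>rho 2\<bar> * 2 ^ 2 \<le> Kr" using Kr[rule_format, of 2] by simp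
    moreover have "0 \<le> \<bar>rho 2\<bar> * (2::real) ^ 2" by simp
    ultimately show ?thesis by linarith
  qed
  define A1 where "A1 = Kr + Kf3 + 2 * Kj2"
  define A2 where "A2 = Kf2 / 2 + Kj1 + A1"
  define Mc where "Mc = A2 ^ 2 * exp A2 + A1"
  have A1nn: "A1 \<ge> 0" using Krnn Kf3nn Kj2nn by (simp add: A1_def)
  have Mcnn: "Mc \<ge> 0" using A1nn by (simp add: Mc_def)
  define Err where "Err = (\<lambda>n g :: nat. \<bar>beta n g - exp (- deriv fF (real g / real n))
        - exp (- deriv fF (real g / real n)) / real n
          * (deriv (deriv fF) (real g / real n) / 2 - deriv jJ (real g / real n))\<bar>)"
  define C where "C = 4 * Mc * max 1 Ks + Err 2 1 * 3 powr (4/3) + 1"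
  have Errnn: "Err n g \<ge> 0" for n g by (simp add: Err_def)
  have C1: "4 * Mc * max 1 Ks \<le> C" using Errnn[of 2 1] by (simp add: C_def)
  have C2: "Err 2 1 * 3 powr (4/3) \<le> C" using Mcnn by (simp add: C_def)
  have Cpos: "C > 0"
  proof -
    have "0 \<le> 4 * Mc * max 1 Ks" using Mcnn by simp
    moreover have "0 \<le> Err 2 1 * 3 powr (4/3)" using Errnn[of 2 1] by simp
    ultimately show ?thesis unfolding C_def by linarith
  qed
  have main: "Err n g \<le> C * (real n + real g) powr (-4/3)"
    if n: "n \<ge> 2" and g: "g \<ge> 1" and cond: "real g / real n \<ge> (real n + real g) powr (-2/3)" for n g :: nat
  proof (cases "g = 1")
    case True
    then have n2: "n = 2" using g1_n2[of n] n cond by simp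
    have "Err 2 1 = Err 2 1 * 3 powr (4/3) * 3 powr (-4/3)"
      by (simp add: powr_add[symmetric])
    also have "\<dots> \<le> C * 3 powr (-4/3)" using C2 by (intro mult_right_mono) auto
    finally show ?thesis using True n2 by simp
  next
    case False
    then have g2: "g \<ge> 2" using g by simp
    define th where "th = real g / real n"
    have th: "th > 0" using n g by (simp add: th_def)
    have MB: "Err n g \<le> exp (- f1 th) * ((A2 ^ 2 * exp A2 + A1) / (real g) ^ 2)"
      using main_bound[OF Kf2 Kf3 Kj1 Kj2 Kr n g2 A1_def A2_def]
      unfolding Err_def th_def[symmetric] using deriv_fF[OF th] deriv2_fF[OF th] deriv_jJ[OF th]
      by simp
    have FI: "exp (- f1 th) / (real g) ^ 2 \<le> 4 * max 1 Ks * (real n + real g) powr (-4/3)"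
    proof (rule final_ineq[where N = "real n" and G = "real g"])
      show "real n \<ge> 2" "real g \<ge> 1" using n g by auto
      show "exp (- f1 th) \<ge> 0" by simp
      show "exp (- f1 th) \<le> 1" using sig_le1[OF th] .
      show "exp (- f1 th) \<le> Ks * (real g / real n)" using Ks[rule_format, OF th] by (simp add: th_def)
      show "real g / real n \<ge> (real n + real g) powr (-2/3)" using cond .
    qed (use Ksnn in auto)
    have "Err n g \<le> Mc * (exp (- f1 th) / (real g) ^ 2)" using MB by (simp add: Mc_def mult.commute)
    also have "\<dots> \<le> Mc * (4 * max 1 Ks * (real n + real g) powr (-4/3))"
      using FI Mcnn by (rule mult_left_mono)
    also have "\<dots> = (4 * Mc * max 1 Ks) * (real n + real g) powr (-4/3)" by simp
    also have "\<dots> \<le> C * (real n + real g) powr (-4/3)" using C1 by (intro mult_right_mono) auto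
    finally show ?thesis .
  qed
  show ?thesis
  proof (intro exI[of _ C] conjI allI impI)
    show "C > 0" using Cpos .
    fix n g :: nat assume "n \<ge> 2" "g \<ge> 1" "real g / real n \<ge> (real n + real g) powr (-2/3)"
    then have "Err n g \<le> C * (real n + real g) powr (-4/3)" by (rule main)
    then show "\<bar>beta n g - exp (- deriv fF (real g / real n))
        - exp (- deriv fF (real g / real n)) / real n
          * (deriv (deriv fF) (real g / real n) / 2 - deriv jJ (real g / real n))\<bar>
     \<le> C * (real n + real g) powr (-4/3)" unfolding Err_def .
  qed
qed

end
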